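(* Let $\ell$ and $m$ be positive integers with $\ell\le m$, let $G$ be a torsion-free group written additively (not necessarily abelian), let $\mathbf{a}=(a_1,\dots,a_m)$ be a sequence of elements of $G$, and let $A$ be the set of distinct terms of $\mathbf{a}$. Then \[ |\Sigma^{\ell}(\mathbf{a})|\ \ge\ \sum_{a\in A}\mu_{\mathbf{a}}(a)-\ell+1 . \]
   Context: $\Sigma^{\ell}(\mathbf{a})$ is the set of all elements $a_{i_1}+\cdots+a_{i_\ell}$ with $i_1,\dots,i_\ell\in[1,m]$ pairwise distinct indices, taken in any order (the sums of $\ell$ terms of $\mathbf{a}$). For $a\in G$, $\rho_a(\mathbf{a})=|\{i\in[1,m]:a_i=a\}|$ and $\mu_{\mathbf{a}}(a)=\min(\ell,\rho_a(\mathbf{a}))$. *)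

theory Defs
  imports Main
begin

definition torsion_free_group :: "'a::group_add itself \<Rightarrow> bool" where
  "torsion_free_group _ \<longleftrightarrow>
     (\<forall>(x::'a) (n::nat). 0 < n \<longrightarrow> sum_list (replicate n x) = 0 \<longrightarrow> x = 0)"

definition sigma_ell :: "nat \<Rightarrow> nat \<Rightarrow> (nat \<Rightarrow> 'a::group_add) \<Rightarrow> 'a set" where
  "sigma_ell l m a =
     {sum_list (map a is) | is. length is = l \<and> distinct is \<and> set is \<subseteq> {1..m}}"

definition rho :: "nat \<Rightarrow> (nat \<Rightarrow> 'a) \<Rightarrow> 'a \<Rightarrow> nat" where
  "rho m a x = card {i \<in> {1..m}. a i = x}"

definition mu :: "nat \<Rightarrow> nat \<Rightarrow> (nat \<Rightarrow> 'a) \<Rightarrow> 'a \<Rightarrow> nat" where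
  "mu l m a x = min l (rho m a x)"

end

theory Submission
  imports Defs
begin


definition ss :: "'a::group_add set \<Rightarrow> 'a set \<Rightarrow> 'a set" where
  "ss A B = {x + y | x y. x \<in> A \<and> y \<in> B}"

lemma ss_alt: "ss A B = (\<lambda>(x,y). x + y) ` (A \<times> B)"
  unfolding ss_def by auto

lemma ss_finite: "finite A \<Longrightarrow> finite B \<Longrightarrow> finite (ss A B)"
  unfolding ss_alt by auto

lemma ss_mono: "A \<subseteq> A' \<Longrightarrow> B \<subseteq> B' \<Longrightarrow> ss A B \<subseteq> ss A' B'"
  unfolding ss_def by blast

lemma card_le_ssA:
  assumes "finite A" "finite B" "b \<in> B" shows "card A \<le> card (ss A B)"
proof -
  have "card A = card ((\<lambda>x. x + b) ` A)" by (simp add: card_image inj_on_def)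
  also have "\<dots> \<le> card (ss A B)"
    by (rule card_mono[OF ss_finite[OF assms(1,2)]]) (use assms in \<open>auto simp: ss_def\<close>)
  finally show ?thesis .
qed

lemma card_le_ssB:
  assumes "finite A" "finite B" "a \<in> A" shows "card B \<le> card (ss A B)"
proof -
  have "card B = card ((\<lambda>x. a + x) ` B)" by (simp add: card_image inj_on_def)
  also have "\<dots> \<le> card (ss A B)"
    by (rule card_mono[OF ss_finite[OF assms(1,2)]]) (use assms in \<open>auto simp: ss_def\<close>)
  finally show ?thesis .
qed

lemma rep_add: "sum_list (replicate (i + d) (e::'a::group_add)) = sum_list (replicate i e) + sum_list (replicate d e)"
  by (simp add: replicate_add)

lemma rep_inj:
  assumes tf: "torsion_free_group TYPE('a::group_add)" and e: "(e::'a) \<noteq> 0"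
  shows "inj (\<lambda>n. sum_list (replicate n e))"
proof -
  have *: False if "i < j" "sum_list (replicate i e) = sum_list (replicate j e)" for i j
  proof -
    obtain d where d: "j = i + d" "0 < d" using \<open>i < j\<close> by (metis less_imp_add_positive)
    have "sum_list (replicate i e) + 0 = sum_list (replicate i e) + sum_list (replicate d e)"
      using that(2) unfolding d(1) rep_add by simp
    then have "sum_list (replicate d e) = 0" by (metis add_left_cancel)
    with tf d(2) e show False unfolding torsion_free_group_def by blast
  qed
  show ?thesis unfolding inj_def by (metis * linorder_neqE_nat)
qed

lemma tf_right:
  assumes tf: "torsion_free_group TYPE('a::group_add)" and e: "(e::'a) \<noteq> 0"
    and A: "finite A" "A \<noteq> {}"
  shows "\<exists>x\<in>A. x + e \<notin> A"
proof (rule ccontr)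
  assume "\<not> ?thesis"
  then have cl: "\<And>x. x \<in> A \<Longrightarrow> x + e \<in> A" by blast
  obtain x0 where x0: "x0 \<in> A" using A by blast
  have "x0 + sum_list (replicate n e) \<in> A" for n
  proof (induction n)
    case 0 then show ?case using x0 by simp
  next
    case (Suc n)
    have "x0 + sum_list (replicate (Suc n) e) = (x0 + sum_list (replicate n e)) + e"
      by (metis replicate_append_same replicate_Suc sum_list_append sum_list.Cons sum_list.Nil add.right_neutral add.assoc)
    then show ?case using cl[OF Suc] by simp
  qed
  then have "range (\<lambda>n. x0 + sum_list (replicate n e)) \<subseteq> A" by auto
  moreover have "inj (\<lambda>n. x0 + sum_list (replicate n e))"
    using rep_inj[OF tf e] unfolding inj_def by simp
  ultimately show False using A(1)
    by (meson finite_imageD finite_subset infinite_UNIV_nat)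
qed

lemma tf_left:
  assumes tf: "torsion_free_group TYPE('a::group_add)" and e: "(e::'a) \<noteq> 0"
    and A: "finite A" "A \<noteq> {}"
  shows "\<exists>x\<in>A. e + x \<notin> A"
proof (rule ccontr)
  assume "\<not> ?thesis"
  then have cl: "\<And>x. x \<in> A \<Longrightarrow> e + x \<in> A" by blast
  obtain x0 where x0: "x0 \<in> A" using A by blast
  have "sum_list (replicate n e) + x0 \<in> A" for n
  proof (induction n)
    case 0 then show ?case using x0 by simp
  next
    case (Suc n)
    have "sum_list (replicate (Suc n) e) + x0 = e + (sum_list (replicate n e) + x0)"
      by (simp add: add.assoc)
    then show ?case using cl[OF Suc] by simp
  qed
  then have "range (\<lambda>n. sum_list (replicate n e) + x0) \<subseteq> A" by auto
  moreover have "inj (\<lambda>n. sum_list (replicate n e) + x0)"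
    using rep_inj[OF tf e] unfolding inj_def by simp
  ultimately show False using A(1)
    by (meson finite_imageD finite_subset infinite_UNIV_nat)
qed

lemma transforms:
  fixes A B :: "'a::group_add set" and e :: 'a
  assumes A: "finite A" and B: "finite B"
  defines "Aa \<equiv> {x\<in>A. x + e \<notin> A}" and "Bb \<equiv> {y\<in>B. e + y \<notin> B}"
  shows "ss (A \<union> (\<lambda>x. x + e) ` Aa) (B - Bb) \<subseteq> ss A B"
    and "ss (A - Aa) (B \<union> (\<lambda>y. e + y) ` Bb) \<subseteq> ss A B"
    and "card (A \<union> (\<lambda>x. x + e) ` Aa) = card A + card Aa"
    and "card (B - Bb) = card B - card Bb"
    and "card (A - Aa) = card A - card Aa"
    and "card (B \<union> (\<lambda>y. e + y) ` Bb) = card B + card Bb"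
    and "card Aa \<le> card A" and "card Bb \<le> card B"
proof -
  show "ss (A \<union> (\<lambda>x. x + e) ` Aa) (B - Bb) \<subseteq> ss A B"
  proof
    fix z assume "z \<in> ss (A \<union> (\<lambda>x. x + e) ` Aa) (B - Bb)"
    then obtain x y where z: "z = x + y" "x \<in> A \<union> (\<lambda>x. x + e) ` Aa" "y \<in> B" "e + y \<in> B"
      unfolding ss_def Bb_def by auto
    show "z \<in> ss A B"
    proof (cases "x \<in> A")
      case True then show ?thesis using z unfolding ss_def by auto
    next
      case False
      then obtain x' where "x' \<in> A" "x = x' + e" using z(2) unfolding Aa_def by auto
      then have "z = x' + (e + y)" using z(1) by (simp add: add.assoc)
      then show ?thesis using \<open>x' \<in> A\<close> z(4) unfolding ss_def by auto
    qed
  qed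
  show "ss (A - Aa) (B \<union> (\<lambda>y. e + y) ` Bb) \<subseteq> ss A B"
  proof
    fix z assume "z \<in> ss (A - Aa) (B \<union> (\<lambda>y. e + y) ` Bb)"
    then obtain x y where z: "z = x + y" "y \<in> B \<union> (\<lambda>y. e + y) ` Bb" "x \<in> A" "x + e \<in> A"
      unfolding ss_def Aa_def by auto
    show "z \<in> ss A B"
    proof (cases "y \<in> B")
      case True then show ?thesis using z unfolding ss_def by auto
    next
      case False
      then obtain y' where "y' \<in> B" "y = e + y'" using z(2) unfolding Bb_def by auto
      then have "z = (x + e) + y'" using z(1) by (simp add: add.assoc)
      then show ?thesis using \<open>y' \<in> B\<close> z(4) unfolding ss_def by auto
    qed
  qed
  have fa: "finite Aa" "Aa \<subseteq> A" using A unfolding Aa_def by auto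
  have fb: "finite Bb" "Bb \<subseteq> B" using B unfolding Bb_def by auto
  show "card Aa \<le> card A" "card Bb \<le> card B" using fa fb A B by (auto intro: card_mono)
  have "A \<inter> (\<lambda>x. x + e) ` Aa = {}" unfolding Aa_def by auto
  then have "card (A \<union> (\<lambda>x. x + e) ` Aa) = card A + card ((\<lambda>x. x + e) ` Aa)"
    using A fa by (simp add: card_Un_disjoint)
  also have "card ((\<lambda>x. x + e) ` Aa) = card Aa" by (simp add: card_image inj_on_def)
  finally show "card (A \<union> (\<lambda>x. x + e) ` Aa) = card A + card Aa" .
  have "B \<inter> (\<lambda>y. e + y) ` Bb = {}" unfolding Bb_def by auto
  then have "card (B \<union> (\<lambda>y. e + y) ` Bb) = card B + card ((\<lambda>y. e + y) ` Bb)"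
    using B fb by (simp add: card_Un_disjoint)
  also have "card ((\<lambda>y. e + y) ` Bb) = card Bb" by (simp add: card_image inj_on_def)
  finally show "card (B \<union> (\<lambda>y. e + y) ` Bb) = card B + card Bb" .
  show "card (B - Bb) = card B - card Bb" using fb B by (simp add: card_Diff_subset)
  show "card (A - Aa) = card A - card Aa" using fa A by (simp add: card_Diff_subset)
qed


lemma ar1: "(bb::nat) < b \<Longrightarrow> bb \<le> aa \<Longrightarrow> (bb = aa \<Longrightarrow> b \<le> a) \<Longrightarrow> 1 \<le> bb \<Longrightarrow>
  a + b \<le> (a+aa) + (b-bb) \<and> (a + b < (a+aa)+(b-bb) \<or> min (a+aa) (b-bb) < min a b)"
  by (cases "bb=aa") (auto simp: min_def)

lemma ar2: "(aa::nat) < a \<Longrightarrow> aa \<le> bb \<Longrightarrow> (bb = aa \<Longrightarrow> a \<le> b) \<Longrightarrow> 1 \<le> aa \<Longrightarrow>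
  a + b \<le> (a-aa) + (b+bb) \<and> (a + b < (a-aa)+(b+bb) \<or> min (a-aa) (b+bb) < min a b)"
  by (cases "bb=aa") (auto simp: min_def)

lemma two_elems: assumes "2 \<le> card B" shows "\<exists>b1 b2. b1 \<in> B \<and> b2 \<in> B \<and> b1 \<noteq> b2"
proof -
  have "finite B" "B \<noteq> {}" using assms card.infinite by fastforce+
  then obtain b1 where b1: "b1 \<in> B" by blast
  have "card (B - {b1}) \<ge> 1" using assms b1 \<open>finite B\<close> by (simp add: card_Diff_singleton)
  then obtain b2 where "b2 \<in> B - {b1}" by (metis card.empty ex_in_conv not_one_le_zero)
  then show ?thesis using b1 by blast
qed

lemma kstep:
  fixes A B :: "'a::group_add set"
  assumes tf: "torsion_free_group TYPE('a)" and A: "finite A" and B: "finite B"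
    and A2: "2 \<le> card A" and B2: "2 \<le> card B"
  shows "\<exists>A' B'. finite A' \<and> finite B' \<and> A' \<noteq> {} \<and> B' \<noteq> {} \<and> ss A' B' \<subseteq> ss A B
     \<and> card A + card B \<le> card A' + card B'
     \<and> (card A + card B < card A' + card B' \<or> min (card A') (card B') < min (card A) (card B))"
proof -
  have gen: "?thesis" if e0: "e \<noteq> 0" and
     hyp: "card {x\<in>A. x + e \<notin> A} < card A \<or> card {y\<in>B. e + y \<notin> B} < card B"
     and hyp2: "card B \<le> card A \<longrightarrow> card {y\<in>B. e + y \<notin> B} < card B"
     and hyp3: "card A < card B \<longrightarrow> card {x\<in>A. x + e \<notin> A} < card A" for e
  proof -
    define Aa where "Aa = {x\<in>A. x + e \<notin> A}"
    define Bb where "Bb = {y\<in>B. e + y \<notin> B}"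
    note T = transforms[OF A B, of e, folded Aa_def Bb_def]
    have Ane: "A \<noteq> {}" "B \<noteq> {}" using A2 B2 by auto
    have a1: "1 \<le> card Aa"
    proof -
      obtain x where "x \<in> A" "x + e \<notin> A" using tf_right[OF tf e0 A Ane(1)] by blast
      then have "Aa \<noteq> {}" unfolding Aa_def by auto
      moreover have "finite Aa" using A unfolding Aa_def by auto
      ultimately show ?thesis by (simp add: Suc_leI card_gt_0_iff)
    qed
    have b1: "1 \<le> card Bb"
    proof -
      obtain x where "x \<in> B" "e + x \<notin> B" using tf_left[OF tf e0 B Ane(2)] by blast
      then have "Bb \<noteq> {}" unfolding Bb_def by auto
      moreover have "finite Bb" using B unfolding Bb_def by auto
      ultimately show ?thesis by (simp add: Suc_leI card_gt_0_iff)
    qed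
    have fin: "finite (A \<union> (\<lambda>x. x + e) ` Aa)" "finite (B - Bb)" "finite (A - Aa)"
      "finite (B \<union> (\<lambda>y. e + y) ` Bb)" using A B unfolding Aa_def Bb_def by auto
    have opt1: ?thesis if "card Bb < card B" "card Bb \<le> card Aa"
       "card Bb = card Aa \<Longrightarrow> card B \<le> card A"
    proof -
      have "B - Bb \<noteq> {}" using T(4) that(1) by force
      moreover have "A \<union> (\<lambda>x. x + e) ` Aa \<noteq> {}" using Ane by auto
      moreover have "card A + card B \<le> card (A \<union> (\<lambda>x. x + e) ` Aa) + card (B - Bb) \<and>
        (card A + card B < card (A \<union> (\<lambda>x. x + e) ` Aa) + card (B - Bb) \<or>
         min (card (A \<union> (\<lambda>x. x + e) ` Aa)) (card (B - Bb)) < min (card A) (card B))"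
        unfolding T(3,4) using that b1 by (rule ar1)
      ultimately show ?thesis using fin(1,2) T(1) by (intro exI[of _ "A \<union> (\<lambda>x. x + e) ` Aa"] exI[of _ "B - Bb"]) blast
    qed
    have opt2: ?thesis if "card Aa < card A" "card Aa \<le> card Bb"
       "card Bb = card Aa \<Longrightarrow> card A \<le> card B"
    proof -
      have "A - Aa \<noteq> {}" using T(5) that(1) by force
      moreover have "B \<union> (\<lambda>y. e + y) ` Bb \<noteq> {}" using Ane by auto
      moreover have "card A + card B \<le> card (A - Aa) + card (B \<union> (\<lambda>y. e + y) ` Bb) \<and>
        (card A + card B < card (A - Aa) + card (B \<union> (\<lambda>y. e + y) ` Bb) \<or>
         min (card (A - Aa)) (card (B \<union> (\<lambda>y. e + y) ` Bb)) < min (card A) (card B))"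
        unfolding T(5,6) using that a1 by (rule ar2)
      ultimately show ?thesis using fin(3,4) T(2) by (intro exI[of _ "A - Aa"] exI[of _ "B \<union> (\<lambda>y. e + y) ` Bb"]) blast
    qed
    show ?thesis
    proof (cases "card B \<le> card A")
      case True
      then have "card Bb < card B" using hyp2 Bb_def by simp
      show ?thesis
      proof (cases "card Bb \<le> card Aa")
        case True2: True
        show ?thesis by (rule opt1) (use True True2 \<open>card Bb < card B\<close> in auto)
      next
        case False2: False
        show ?thesis by (rule opt2) (use True False2 \<open>card Bb < card B\<close> in auto)
      qed
    next
      case False
      then have "card Aa < card A" using hyp3 Aa_def by simp
      show ?thesis
      proof (cases "card Aa \<le> card Bb")
        case True2: True
        show ?thesis by (rule opt2) (use False True2 \<open>card Aa < card A\<close> in auto)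
      next
        case False2: False
        show ?thesis by (rule opt1) (use False False2 \<open>card Aa < card A\<close> in auto)
      qed
    qed
  qed
  show ?thesis
  proof (cases "card B \<le> card A")
    case True
    obtain b1 b2 where b: "b1 \<in> B" "b2 \<in> B" "b1 \<noteq> b2"
      using two_elems[OF B2] by blast
    define e where "e = b2 + - b1"
    have e0: "e \<noteq> 0" using b(3) unfolding e_def by simp
    have eb: "e + b1 = b2" unfolding e_def by (simp add: add.assoc)
    have "{y\<in>B. e + y \<notin> B} \<subset> B" using b eb by auto
    then have "card {y\<in>B. e + y \<notin> B} < card B" using B by (simp add: psubset_card_mono)
    then show ?thesis using gen[OF e0] True by auto
  next
    case False
    obtain a1 a2 where b: "a1 \<in> A" "a2 \<in> A" "a1 \<noteq> a2"
      using two_elems[OF A2] by blast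
    define e where "e = - a1 + a2"
    have e0: "e \<noteq> 0" using b(3) unfolding e_def by (metis add_minus_cancel add.right_neutral)
    have eb: "a1 + e = a2" unfolding e_def by (simp add: add.assoc[symmetric])
    have "{x\<in>A. x + e \<notin> A} \<subset> A" using b eb by auto
    then have "card {x\<in>A. x + e \<notin> A} < card A" using A by (simp add: psubset_card_mono)
    then show ?thesis using gen[OF e0] False by auto
  qed
qed


lemma card_one_ss:
  assumes "card A = 1" "finite B" shows "card (ss A B) = card B"
proof -
  obtain a where "A = {a}" using assms(1) card_1_singletonE by blast
  then have "ss A B = (\<lambda>y. a + y) ` B" unfolding ss_def by auto
  then show ?thesis by (simp add: card_image inj_on_def)
qed

lemma card_ss_one:
  assumes "card B = 1" "finite A" shows "card (ss A B) = card A"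
proof -
  obtain b where "B = {b}" using assms(1) card_1_singletonE by blast
  then have "ss A B = (\<lambda>x. x + b) ` A" unfolding ss_def by auto
  then show ?thesis by (simp add: card_image inj_on_def)
qed

lemma kemperman:
  fixes A B :: "'a::group_add set"
  assumes tf: "torsion_free_group TYPE('a)"
  shows "finite A \<Longrightarrow> finite B \<Longrightarrow> A \<noteq> {} \<Longrightarrow> B \<noteq> {} \<Longrightarrow> card A + card B \<le> card (ss A B) + 1"
proof -
  let ?R = "measures [\<lambda>(A::'a set, B). 2 * card (ss A B) - (card A + card B), \<lambda>(A, B). min (card A) (card B)]"
  have "\<forall>(A::'a set) (B::'a set). p = (A, B) \<longrightarrow> finite A \<longrightarrow> finite B \<longrightarrow> A \<noteq> {} \<longrightarrow> B \<noteq> {} \<longrightarrow> card A + card B \<le> card (ss A B) + 1" for p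
  proof (induction p rule: wf_induct[OF wf_measures[of "[\<lambda>(A::'a set, B). 2 * card (ss A B) - (card A + card B), \<lambda>(A, B). min (card A) (card B)]"]])
    case (1 p)
    show ?case
    proof (intro allI impI)
      fix A B assume p: "p = (A, B)" and fin: "finite A" "finite B" and ne: "A \<noteq> {}" "B \<noteq> {}"
      have cA: "1 \<le> card A" "1 \<le> card B" using fin ne by (simp_all add: Suc_leI card_gt_0_iff)
      show "card A + card B \<le> card (ss A B) + 1"
      proof (cases "card A = 1 \<or> card B = 1")
        case True
        then show ?thesis using card_one_ss[OF _ fin(2)] card_ss_one[OF _ fin(1)] by auto
      next
        case False
        then have "2 \<le> card A" "2 \<le> card B" using cA by auto
        then obtain A' B' where A': "finite A'" "finite B'" "A' \<noteq> {}" "B' \<noteq> {}" "ss A' B' \<subseteq> ss A B"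
          "card A + card B \<le> card A' + card B'"
          "card A + card B < card A' + card B' \<or> min (card A') (card B') < min (card A) (card B)"
          using kstep[OF tf fin] by blast
        have f1: "card (ss A' B') \<le> card (ss A B)" using A'(5) ss_finite[OF fin] by (rule card_mono[rotated])
        obtain a' b' where "a' \<in> A'" "b' \<in> B'" using A'(3,4) by blast
        have f2: "card A' \<le> card (ss A' B')" "card B' \<le> card (ss A' B')"
          using card_le_ssA[OF A'(1,2) \<open>b' \<in> B'\<close>] card_le_ssB[OF A'(1,2) \<open>a' \<in> A'\<close>] by auto
        have "((A', B'), p) \<in> ?R" unfolding p using f1 f2 A'(6,7) by (auto simp: in_measures)
        then have "card A' + card B' \<le> card (ss A' B') + 1" using 1 A' by blast
        then show ?thesis using f1 A'(6) by linarith
      qed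
    qed
  qed
  then show "finite A \<Longrightarrow> finite B \<Longrightarrow> A \<noteq> {} \<Longrightarrow> B \<noteq> {} \<Longrightarrow> card A + card B \<le> card (ss A B) + 1" by blast
qed




lemma coloring:
  fixes a :: "nat \<Rightarrow> 'a"
  assumes "0 < l" "l \<le> m"
  shows "\<exists>c::nat\<Rightarrow>nat. (\<forall>j<l. \<exists>i\<in>{1..m}. c i = j)
    \<and> (\<forall>i\<in>{1..m}. \<forall>i'\<in>{1..m}. c i < l \<longrightarrow> c i = c i' \<longrightarrow> a i = a i' \<longrightarrow> i = i')
    \<and> (\<forall>x. card {i\<in>{1..m}. c i < l \<and> a i = x} = min l (card {i\<in>{1..m}. a i = x}))"
  using assms(2)
proof (induction m rule: nat_induct_at_least)
  case base
  define c where "c = (\<lambda>i::nat. i - 1)"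
  have "\<forall>j<l. \<exists>i\<in>{1..l}. c i = j" unfolding c_def
    by (metis Suc_leI add_diff_cancel_left' atLeastAtMost_iff le_add1 plus_1_eq_Suc)
  moreover have "\<forall>i\<in>{1..l}. \<forall>i'\<in>{1..l}. c i < l \<longrightarrow> c i = c i' \<longrightarrow> a i = a i' \<longrightarrow> i = i'"
    unfolding c_def by auto
  moreover have "card {i\<in>{1..l}. c i < l \<and> a i = x} = min l (card {i\<in>{1..l}. a i = x})" for x
  proof -
    have "{i\<in>{1..l}. c i < l \<and> a i = x} = {i\<in>{1..l}. a i = x}" unfolding c_def by auto
    moreover have "card {i\<in>{1..l}. a i = x} \<le> l"
    proof -
      have "card {i\<in>{1..l}. a i = x} \<le> card {1..l}" by (rule card_mono) auto
      then show ?thesis by simp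
    qed
    ultimately show ?thesis by simp
  qed
  ultimately show ?case by blast
next
  case (Suc n)
  then obtain c where P1: "\<forall>j<l. \<exists>i\<in>{1..n}. c i = j"
    and P2: "\<forall>i\<in>{1..n}. \<forall>i'\<in>{1..n}. c i < l \<longrightarrow> c i = c i' \<longrightarrow> a i = a i' \<longrightarrow> i = i'"
    and P3: "\<forall>x. card {i\<in>{1..n}. c i < l \<and> a i = x} = min l (card {i\<in>{1..n}. a i = x})"
    by blast
  define x where "x = a (Suc n)"
  have ins: "{1..Suc n} = insert (Suc n) {1..n}" by auto
  show ?case
  proof (cases "l \<le> card {i\<in>{1..n}. a i = x}")
    case big: True
    define c' where "c' = c(Suc n := l)"
    have c'eq: "\<And>i. i \<in> {1..n} \<Longrightarrow> c' i = c i" unfolding c'_def by auto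
    have "\<forall>j<l. \<exists>i\<in>{1..Suc n}. c' i = j" using P1 c'eq by fastforce
    moreover have "\<forall>i\<in>{1..Suc n}. \<forall>i'\<in>{1..Suc n}. c' i < l \<longrightarrow> c' i = c' i' \<longrightarrow> a i = a i' \<longrightarrow> i = i'"
      using P2 unfolding c'_def ins by auto
    moreover have "card {i\<in>{1..Suc n}. c' i < l \<and> a i = y} = min l (card {i\<in>{1..Suc n}. a i = y})" for y
    proof -
      have e1: "{i\<in>{1..Suc n}. c' i < l \<and> a i = y} = {i\<in>{1..n}. c i < l \<and> a i = y}"
        unfolding c'_def ins by auto
      show ?thesis
      proof (cases "y = x")
        case True
        have "{i\<in>{1..Suc n}. a i = y} = insert (Suc n) {i\<in>{1..n}. a i = y}" unfolding ins using True x_def by auto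
        then have "card {i\<in>{1..Suc n}. a i = y} = Suc (card {i\<in>{1..n}. a i = y})" by simp
        then show ?thesis using e1 P3 big True by simp
      next
        case False
        have "{i\<in>{1..Suc n}. a i = y} = {i\<in>{1..n}. a i = y}" unfolding ins using False x_def by auto
        then show ?thesis using e1 P3 by simp
      qed
    qed
    ultimately show ?thesis by blast
  next
    case False
    have "\<exists>j<l. \<forall>i\<in>{i\<in>{1..n}. a i = x}. c i \<noteq> j"
    proof (rule ccontr)
      assume "\<not> ?thesis"
      then have "{..<l} \<subseteq> c ` {i\<in>{1..n}. a i = x}" by force
      then have "card {..<l} \<le> card (c ` {i\<in>{1..n}. a i = x})" by (intro card_mono) auto
      then have "l \<le> card (c ` {i\<in>{1..n}. a i = x})" by simp
      also have "\<dots> \<le> card {i\<in>{1..n}. a i = x}" by (rule card_image_le) simp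
      finally show False using False by simp
    qed
    then obtain j where j: "j < l" "\<And>i. i \<in> {1..n} \<Longrightarrow> a i = x \<Longrightarrow> c i \<noteq> j" by blast
    define c' where "c' = c(Suc n := j)"
    have c'eq: "\<And>i. i \<in> {1..n} \<Longrightarrow> c' i = c i" unfolding c'_def by auto
    have "\<forall>j<l. \<exists>i\<in>{1..Suc n}. c' i = j" using P1 c'eq by fastforce
    moreover have "\<forall>i\<in>{1..Suc n}. \<forall>i'\<in>{1..Suc n}. c' i < l \<longrightarrow> c' i = c' i' \<longrightarrow> a i = a i' \<longrightarrow> i = i'"
      using P2 j unfolding c'_def ins x_def by (auto, metis, metis)
    moreover have "card {i\<in>{1..Suc n}. c' i < l \<and> a i = y} = min l (card {i\<in>{1..Suc n}. a i = y})" for y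
    proof (cases "y = x")
      case True
      have "{i\<in>{1..Suc n}. a i = y} = insert (Suc n) {i\<in>{1..n}. a i = y}" unfolding ins using True x_def by auto
      then have e2: "card {i\<in>{1..Suc n}. a i = y} = Suc (card {i\<in>{1..n}. a i = y})" by simp
      have "{i\<in>{1..Suc n}. c' i < l \<and> a i = y} = insert (Suc n) {i\<in>{1..n}. c i < l \<and> a i = y}"
        using True x_def j(1) unfolding c'_def ins by auto
      then have "card {i\<in>{1..Suc n}. c' i < l \<and> a i = y} = Suc (card {i\<in>{1..n}. c i < l \<and> a i = y})" by simp
      then show ?thesis using e2 P3 False True by simp
    next
      case False
      have "{i\<in>{1..Suc n}. a i = y} = {i\<in>{1..n}. a i = y}" unfolding ins using False x_def by auto
      moreover have "{i\<in>{1..Suc n}. c' i < l \<and> a i = y} = {i\<in>{1..n}. c i < l \<and> a i = y}"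
        using False x_def unfolding c'_def ins by auto
      ultimately show ?thesis using P3 by simp
    qed
    ultimately show ?thesis by blast
  qed
qed


theorem theorem6p1:
  fixes l m :: nat and a :: "nat \<Rightarrow> 'a::group_add"
  assumes "0 < l" and "l \<le> m"
    and "torsion_free_group TYPE('a)"
  shows "int (card (sigma_ell l m a))
           \<ge> (\<Sum>x\<in>a ` {1..m}. int (mu l m a x)) - int l + 1"
proof -
  obtain c :: "nat \<Rightarrow> nat" where P1: "\<forall>j<l. \<exists>i\<in>{1..m}. c i = j"
    and P2: "\<forall>i\<in>{1..m}. \<forall>i'\<in>{1..m}. c i < l \<longrightarrow> c i = c i' \<longrightarrow> a i = a i' \<longrightarrow> i = i'"
    and P3: "\<forall>x. card {i\<in>{1..m}. c i < l \<and> a i = x} = min l (card {i\<in>{1..m}. a i = x})"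
    using coloring[OF assms(1,2), of a] by blast
  define C where "C j = {i\<in>{1..m}. c i = j}" for j
  define T where "T k = {sum_list (map a xs) | xs. length xs = k \<and> distinct xs \<and> set xs \<subseteq> {1..m} \<and> (\<forall>t<k. c (xs!t) = t)}" for k
  have finL: "finite ((\<lambda>xs. sum_list (map a xs)) ` {xs. set xs \<subseteq> {1..m} \<and> length xs = k})" for k
    by (intro finite_imageI finite_lists_length_eq) simp
  have finT: "finite (T k)" for k
    by (rule finite_subset[OF _ finL[of k]]) (auto simp: T_def)
  have finS: "finite (sigma_ell l m a)"
    by (rule finite_subset[OF _ finL[of l]]) (auto simp: sigma_ell_def)
  have claim: "k \<le> l \<Longrightarrow> T k \<noteq> {} \<and> (\<Sum>j<k. card (a ` C j)) + 1 \<le> card (T k) + k" for k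
  proof (induction k)
    case 0
    have "T 0 = {0}" unfolding T_def by auto
    then show ?case by simp
  next
    case (Suc k)
    then have IH: "T k \<noteq> {}" "(\<Sum>j<k. card (a ` C j)) + 1 \<le> card (T k) + k" and kl: "k < l" by auto
    have Bne: "a ` C k \<noteq> {}" using P1 kl unfolding C_def by fastforce
    have Bfin: "finite (a ` C k)" unfolding C_def by simp
    have sub: "ss (T k) (a ` C k) \<subseteq> T (Suc k)"
    proof
      fix z assume "z \<in> ss (T k) (a ` C k)"
      then obtain xs i where z: "z = sum_list (map a xs) + a i" "length xs = k" "distinct xs"
        "set xs \<subseteq> {1..m}" "\<forall>t<k. c (xs!t) = t" "i \<in> {1..m}" "c i = k"
        unfolding ss_def T_def C_def by blast
      have n1: "i \<notin> set xs"
      proof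
        assume "i \<in> set xs"
        then obtain t where "t < k" "xs ! t = i" using z(2) by (metis in_set_conv_nth)
        then show False using z(5,7) by auto
      qed
      have c1: "\<forall>t<Suc k. c ((xs @ [i]) ! t) = t"
        using z(2,5,7) by (auto simp: nth_append less_Suc_eq)
      have e1: "z = sum_list (map a (xs @ [i]))" using z(1) by simp
      have l1: "length (xs @ [i]) = Suc k" using z(2) by simp
      have d1: "distinct (xs @ [i])" using z(3) n1 by simp
      have s1: "set (xs @ [i]) \<subseteq> {1..m}" using z(4,6) by simp
      have "\<exists>ys. z = sum_list (map a ys) \<and> length ys = Suc k \<and> distinct ys \<and> set ys \<subseteq> {1..m} \<and> (\<forall>t<Suc k. c (ys!t) = t)"
        using e1 l1 d1 s1 c1 by blast
      then show "z \<in> T (Suc k)" unfolding T_def by blast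
    qed
    have "card (T k) + card (a ` C k) \<le> card (ss (T k) (a ` C k)) + 1"
      by (rule kemperman[OF assms(3) finT Bfin IH(1) Bne])
    also have "card (ss (T k) (a ` C k)) \<le> card (T (Suc k))" by (rule card_mono[OF finT sub])
    finally have "card (T k) + card (a ` C k) \<le> card (T (Suc k)) + 1" by simp
    moreover have "T (Suc k) \<noteq> {}"
    proof -
      obtain s y where "s \<in> T k" "y \<in> a ` C k" using IH(1) Bne by blast
      then have "s + y \<in> ss (T k) (a ` C k)" unfolding ss_def by blast
      then show ?thesis using sub by blast
    qed
    ultimately show ?case using IH(2) by simp
  qed
  define U where "U = {i\<in>{1..m}. c i < l}"
  have finU: "finite U" unfolding U_def by simp
  have s1: "(\<Sum>j<l. card (a ` C j)) = (\<Sum>j<l. card (C j))"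
  proof (rule sum.cong[OF refl])
    fix j assume "j \<in> {..<l}"
    then have "inj_on a (C j)" using P2 unfolding C_def inj_on_def by auto
    then show "card (a ` C j) = card (C j)" by (rule card_image)
  qed
  have s2: "(\<Sum>j<l. card (C j)) = card U"
  proof -
    have g: "(\<Sum>j\<in>{..<l}. sum (\<lambda>_. 1::nat) {x\<in>U. c x = j}) = sum (\<lambda>_. 1) U"
      by (rule sum.group[OF finU]) (auto simp: U_def)
    have "(\<Sum>j<l. card (C j)) = (\<Sum>j\<in>{..<l}. sum (\<lambda>_. 1::nat) {x\<in>U. c x = j})"
    proof (rule sum.cong[OF refl])
      fix j assume "j \<in> {..<l}"
      then have "{x\<in>U. c x = j} = C j" unfolding U_def C_def by auto
      then show "card (C j) = sum (\<lambda>_. 1::nat) {x\<in>U. c x = j}" by simp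
    qed
    also have "\<dots> = card U" using g by simp
    finally show ?thesis .
  qed
  have s3: "(\<Sum>x\<in>a ` {1..m}. mu l m a x) = card U"
  proof -
    have g: "(\<Sum>x\<in>a ` {1..m}. sum (\<lambda>_. 1::nat) {i\<in>U. a i = x}) = sum (\<lambda>_. 1) U"
      by (rule sum.group[OF finU]) (auto simp: U_def)
    have "(\<Sum>x\<in>a ` {1..m}. mu l m a x) = (\<Sum>x\<in>a ` {1..m}. sum (\<lambda>_. 1::nat) {i\<in>U. a i = x})"
    proof (rule sum.cong[OF refl])
      fix x
      have "{i\<in>U. a i = x} = {i\<in>{1..m}. c i < l \<and> a i = x}" unfolding U_def by auto
      moreover have "mu l m a x = card {i\<in>{1..m}. c i < l \<and> a i = x}"
        using P3 unfolding mu_def rho_def by simp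
      ultimately show "mu l m a x = sum (\<lambda>_. 1::nat) {i\<in>U. a i = x}" by simp
    qed
    also have "\<dots> = card U" using g by simp
    finally show ?thesis .
  qed
  have "T l \<subseteq> sigma_ell l m a" unfolding T_def sigma_ell_def by blast
  then have "card (T l) \<le> card (sigma_ell l m a)" by (rule card_mono[OF finS])
  moreover have "(\<Sum>j<l. card (a ` C j)) + 1 \<le> card (T l) + l" using claim by simp
  ultimately have "(\<Sum>x\<in>a ` {1..m}. mu l m a x) + 1 \<le> card (sigma_ell l m a) + l"
    using s1 s2 s3 by simp
  then have "int (\<Sum>x\<in>a ` {1..m}. mu l m a x) + 1 \<le> int (card (sigma_ell l m a)) + int l" by linarith
  then show ?thesis by (simp add: of_nat_sum)
qed


end
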